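(* Let $K\ge 2$. Fix constants $\mu_1,\ldots,\mu_M\ge 0$ and $P_1^{\rm ST},\ldots,P_K^{\rm ST}>0$. For a channel realization $\boldsymbol{\alpha}$ consider the problem $$\max_{p_1,\ldots,p_K}\ \log\Big(1+\sum_{k=1}^K h_kp_k\Big)-\sum_{m=1}^M\mu_m\sum_{k=1}^K g_{km}p_k\quad\text{s.t.}\quad 0\le p_k\le P_k^{\rm ST}\ \ \forall k.$$ Let $\pi$ be a permutation of $\{1,\ldots,K\}$ with $\frac{h_{\pi(1)}}{\sum_m\mu_m g_{\pi(1)m}}\ge\frac{h_{\pi(2)}}{\sum_m\mu_m g_{\pi(2)m}}\ge\cdots\ge\frac{h_{\pi(K)}}{\sum_m\mu_m g_{\pi(K)m}}$. Then, for almost every realization $\boldsymbol{\alpha}$, the optimal solution has at most one user with positive power (D-TDMA is optimal) if and only if $$1+h_{\pi(1)}P_{\pi(1)}^{\rm ST}\ \ge\ \frac{h_{\pi(2)}}{\sum_{m=1}^M\mu_m g_{\pi(2)m}} .$$ In that case user $\pi(1)$ is the one selected for transmission, with optimal power $$p_{\pi(1)}^*=\min\Big(P_{\pi(1)}^{\rm ST},\ \Big(\frac{1}{\sum_{m=1}^M\mu_m g_{\pi(1)m}}-\frac{1}{h_{\pi(1)}}\Big)^+\Big),$$ and all other users have zero power.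
   Context: $\boldsymbol{\alpha}=(h_1,\ldots,h_K,g_{11},\ldots,g_{KM})$ is a random vector of nonnegative channel power gains ($h_k$: secondary user $k$ to secondary base station; $g_{km}$: secondary user $k$ to primary receiver $m$) with a continuous, differentiable joint cumulative distribution function, the $h_k$'s and $g_{km}$'s being independent. This per-fading-state problem arises (with $\mu_m$ the multipliers of long-term interference-power constraints) in maximizing the ergodic sum rate of the fading cognitive multiple-access channel under short-term transmit-power and long-term interference-power constraints. Conventions: $1/0=+\infty$, $x/0=+\infty$ for $x>0$, $(x)^+=\max(0,x)$. *)

theory Defs
  imports "HOL-Probability.Probability"
begin

text \<open>Users are indexed by a finite type 'k (K = CARD('k)), primary receivers by a
finite type 'm (M = CARD('m)). A channel realization is a pair
(h, g) with h :: real^'k (h_k) and g :: real^('k \<times> 'm) (g_km).\<close>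

definition wgain :: "('m::finite \<Rightarrow> real) \<Rightarrow> real^('k::finite \<times> 'm) \<Rightarrow> 'k \<Rightarrow> real" where
  "wgain mu g k = (\<Sum>m\<in>UNIV. mu m * g $ (k, m))"

text \<open>Extended-real quotient with the conventions x/0 = +infinity for x > 0
(and 0/0 taken to be 0; this case is irrelevant almost surely).\<close>
definition eratio :: "real \<Rightarrow> real \<Rightarrow> ereal" where
  "eratio x y = (if y = 0 then (if x > 0 then \<infinity> else 0) else ereal (x / y))"

definition einv :: "real \<Rightarrow> ereal" where
  "einv x = (if x = 0 then \<infinity> else ereal (1 / x))"

definition objective :: "('m::finite \<Rightarrow> real) \<Rightarrow> real^('k::finite) \<Rightarrow> real^('k \<times> 'm) \<Rightarrow> ('k \<Rightarrow> real) \<Rightarrow> real" where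
  "objective mu h g p =
     ln (1 + (\<Sum>k\<in>UNIV. h $ k * p k)) - (\<Sum>m\<in>UNIV. mu m * (\<Sum>k\<in>UNIV. g $ (k, m) * p k))"

definition feasible :: "('k \<Rightarrow> real) \<Rightarrow> ('k \<Rightarrow> real) \<Rightarrow> bool" where
  "feasible Pst p \<longleftrightarrow> (\<forall>k. 0 \<le> p k \<and> p k \<le> Pst k)"

definition optimal_power ::
  "('m::finite \<Rightarrow> real) \<Rightarrow> ('k::finite \<Rightarrow> real) \<Rightarrow> real^'k \<Rightarrow> real^('k \<times> 'm) \<Rightarrow> ('k \<Rightarrow> real) \<Rightarrow> bool" where
  "optimal_power mu Pst h g p \<longleftrightarrow>
     feasible Pst p \<and> (\<forall>q. feasible Pst q \<longrightarrow> objective mu h g q \<le> objective mu h g p)"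

text \<open>pi : {0..<K} -> users is a bijection ordering the users by nonincreasing
ratio h_k / (sum_m mu_m g_km); pi 0, pi 1 are the paper's pi(1), pi(2).\<close>
definition sorted_perm ::
  "('m::finite \<Rightarrow> real) \<Rightarrow> real^('k::finite) \<Rightarrow> real^('k \<times> 'm) \<Rightarrow> (nat \<Rightarrow> 'k) \<Rightarrow> bool" where
  "sorted_perm mu h g \<pi> \<longleftrightarrow>
     bij_betw \<pi> {..<CARD('k)} UNIV \<and>
     (\<forall>i j. i \<le> j \<longrightarrow> j < CARD('k) \<longrightarrow>
        eratio (h $ \<pi> j) (wgain mu g (\<pi> j)) \<le> eratio (h $ \<pi> i) (wgain mu g (\<pi> i)))"

definition tdma_power ::
  "('m::finite \<Rightarrow> real) \<Rightarrow> ('k::finite \<Rightarrow> real) \<Rightarrow> real^'k \<Rightarrow> real^('k \<times> 'm) \<Rightarrow> 'k \<Rightarrow> 'k \<Rightarrow> real" where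
  "tdma_power mu Pst h g u k =
     (if k = u then real_of_ereal (min (ereal (Pst u)) (max 0 (einv (wgain mu g u) - einv (h $ u))))
      else 0)"

definition joint_cdf ::
  "'a measure \<Rightarrow> ('a \<Rightarrow> real^('k::finite)) \<Rightarrow> ('a \<Rightarrow> real^('k \<times> 'm::finite))
     \<Rightarrow> (real^'k) \<times> (real^('k \<times> 'm)) \<Rightarrow> real" where
  "joint_cdf M h g z = measure M {\<omega>\<in>space M. (\<forall>k. h \<omega> $ k \<le> fst z $ k) \<and> (\<forall>i. g \<omega> $ i \<le> snd z $ i)}"

definition gains :: "('a \<Rightarrow> real^('k::finite)) \<Rightarrow> ('a \<Rightarrow> real^('k \<times> 'm::finite)) \<Rightarrow> 'k + ('k \<times> 'm) \<Rightarrow> 'a \<Rightarrow> real" where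
  "gains h g i = (case i of Inl k \<Rightarrow> (\<lambda>\<omega>. h \<omega> $ k) | Inr km \<Rightarrow> (\<lambda>\<omega>. g \<omega> $ km))"

end

theory Submission
  imports Defs
begin

definition SS :: "('k::finite \<Rightarrow> real) \<Rightarrow> ('k \<Rightarrow> real) \<Rightarrow> real" where
  "SS h p = 1 + (\<Sum>k\<in>UNIV. h k * p k)"

definition FF :: "('k::finite \<Rightarrow> real) \<Rightarrow> ('k \<Rightarrow> real) \<Rightarrow> ('k \<Rightarrow> real) \<Rightarrow> real" where
  "FF h c p = ln (SS h p) - (\<Sum>k\<in>UNIV. c k * p k)"

definition opt :: "('k::finite \<Rightarrow> real) \<Rightarrow> ('k \<Rightarrow> real) \<Rightarrow> ('k \<Rightarrow> real) \<Rightarrow> ('k \<Rightarrow> real) \<Rightarrow> bool" where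
  "opt P h c p \<longleftrightarrow> feasible P p \<and> (\<forall>q. feasible P q \<longrightarrow> FF h c q \<le> FF h c p)"

definition KKT :: "('k::finite \<Rightarrow> real) \<Rightarrow> ('k \<Rightarrow> real) \<Rightarrow> ('k \<Rightarrow> real) \<Rightarrow> ('k \<Rightarrow> real) \<Rightarrow> bool" where
  "KKT P h c p \<longleftrightarrow> (\<forall>k. (h k / SS h p - c k > 0 \<longrightarrow> p k = P k) \<and> (h k / SS h p - c k < 0 \<longrightarrow> p k = 0))"

lemma SS_ge1: "(\<forall>k. h k \<ge> 0) \<Longrightarrow> feasible P p \<Longrightarrow> SS h p \<ge> 1"
  unfolding SS_def feasible_def by (auto intro!: sum_nonneg)

lemma FF_diff:
  assumes "SS h p > 0"
  shows "FF h c q - FF h c p = (ln (SS h q) - ln (SS h p) - (SS h q - SS h p) / SS h p)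
     + (\<Sum>k\<in>UNIV. (h k / SS h p - c k) * (q k - p k))"
proof -
  have "(\<Sum>k\<in>UNIV. (h k / SS h p - c k) * (q k - p k)) =
     (\<Sum>k\<in>UNIV. h k * q k - h k * p k) / SS h p - (\<Sum>k\<in>UNIV. c k * q k) + (\<Sum>k\<in>UNIV. c k * p k)"
    by (simp add: sum_divide_distrib sum_subtractf[symmetric] sum.distrib[symmetric] algebra_simps diff_divide_distrib)
  also have "(\<Sum>k\<in>UNIV. h k * q k - h k * p k) = SS h q - SS h p"
    by (simp add: SS_def sum_subtractf)
  finally show ?thesis unfolding FF_def by simp
qed

lemma kkt_terms:
  assumes "KKT P h c p" "feasible P q" "feasible P p"
  shows "(h k / SS h p - c k) * (q k - p k) \<le> 0"
proof -
  from assms(1) have k: "(h k / SS h p - c k > 0 \<longrightarrow> p k = P k) \<and> (h k / SS h p - c k < 0 \<longrightarrow> p k = 0)"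
    unfolding KKT_def by blast
  from assms(2,3) have "0 \<le> q k" "q k \<le> P k" "0 \<le> p k" unfolding feasible_def by auto
  then show ?thesis using k
    by (cases "h k / SS h p - c k > 0"; cases "h k / SS h p - c k < 0")
       (auto simp: mult_nonpos_nonneg mult_nonneg_nonpos)
qed

lemma kkt_opt:
  assumes h: "\<forall>k. h k \<ge> 0" and p: "feasible P p" and K: "KKT P h c p"
  shows "opt P h c p"
  unfolding opt_def
proof (intro conjI allI impI p)
  fix q assume q: "feasible P q"
  have Sp: "SS h p \<ge> 1" "SS h q \<ge> 1" using SS_ge1[OF h] p q by auto
  have A: "ln (SS h q) - ln (SS h p) - (SS h q - SS h p) / SS h p \<le> 0"
    using ln_diff_le[of "SS h q" "SS h p"] Sp by simp
  have B: "(\<Sum>k\<in>UNIV. (h k / SS h p - c k) * (q k - p k)) \<le> 0"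
    by (rule sum_nonpos) (use kkt_terms[OF K q p] in auto)
  show "FF h c q \<le> FF h c p" using FF_diff[of h p c q] Sp A B by simp
qed

lemma kkt_unique:
  assumes h: "\<forall>k. h k > 0" and p: "feasible P p" and K: "KKT P h c p" and q: "opt P h c q"
    and dist: "\<forall>k j. h k / SS h p - c k = 0 \<longrightarrow> h j / SS h p - c j = 0 \<longrightarrow> k = j"
  shows "q = p"
proof -
  have h0: "\<forall>k. h k \<ge> 0" using h less_imp_le by blast
  have qf: "feasible P q" and qo: "FF h c p \<le> FF h c q" using q p unfolding opt_def by auto
  have Sp: "SS h p \<ge> 1" "SS h q \<ge> 1" using SS_ge1[OF h0] p qf by auto
  define A where "A = ln (SS h q) - ln (SS h p) - (SS h q - SS h p) / SS h p"
  define B where "B = (\<Sum>k\<in>UNIV. (h k / SS h p - c k) * (q k - p k))"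
  have A: "A \<le> 0" unfolding A_def
    using ln_diff_le[of "SS h q" "SS h p"] Sp by simp
  have terms: "\<And>k. (h k / SS h p - c k) * (q k - p k) \<le> 0" using kkt_terms[OF K qf p] .
  have B: "B \<le> 0" unfolding B_def by (rule sum_nonpos) (use terms in auto)
  have AB: "A + B \<ge> 0" using FF_diff[of h p c q] Sp qo unfolding A_def B_def by simp
  have A0: "A = 0" and B0: "B = 0" using A B AB by auto
  have Seq: "SS h q = SS h p"
  proof (rule ccontr)
    assume "SS h q \<noteq> SS h p"
    then have "A < 0" unfolding A_def using ln_diff_less[of "SS h q" "SS h p"] Sp by simp
    then show False using A0 by simp
  qed
  have allt: "\<forall>k\<in>UNIV. (h k / SS h p - c k) * (q k - p k) = 0"
  proof -
    have "(\<Sum>k\<in>UNIV. - ((h k / SS h p - c k) * (q k - p k))) = 0"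
      using B0 unfolding B_def by (simp add: sum_negf)
    then have "\<forall>k\<in>UNIV. - ((h k / SS h p - c k) * (q k - p k)) = 0"
      by (subst (asm) sum_nonneg_eq_0_iff) (use terms in auto)
    then show ?thesis by simp
  qed
  show "q = p"
  proof (rule ccontr)
    assume "q \<noteq> p"
    then obtain k0 where k0: "q k0 \<noteq> p k0" by auto
    then have d0: "h k0 / SS h p - c k0 = 0" using allt by auto
    have oth: "\<forall>j. j \<noteq> k0 \<longrightarrow> q j = p j"
    proof (intro allI impI)
      fix j assume "j \<noteq> k0"
      then have "h j / SS h p - c j \<noteq> 0" using dist d0 by blast
      then show "q j = p j" using allt by auto
    qed
    have "(\<Sum>k\<in>UNIV. h k * q k - h k * p k) = (\<Sum>k\<in>UNIV. if k = k0 then h k0 * q k0 - h k0 * p k0 else 0)"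
      by (rule sum.cong) (use oth in auto)
    also have "\<dots> = h k0 * (q k0 - p k0)" by (simp add: algebra_simps)
    finally have "(\<Sum>k\<in>UNIV. h k * q k - h k * p k) = h k0 * (q k0 - p k0)" .
    moreover have "(\<Sum>k\<in>UNIV. h k * q k - h k * p k) = 0"
      using Seq by (simp add: SS_def sum_subtractf)
    ultimately show False using k0 h[rule_format, of k0] by simp
  qed
qed

lemma aux_eps1:
  fixes a d r :: real
  assumes a: "a \<ge> 0" and d: "d > 0" and r: "r > 0"
    and e: "e = min r (min (1/(a+1)) (d/(2*(a+1)^2)))"
  shows "e > 0" "e \<le> r" "a * e \<le> 1" "(a*e)^2 < d * e"
proof -
  show "e > 0" using a d r e by auto
  show "e \<le> r" using e by auto
  have e1: "e \<le> 1/(a+1)" using e by auto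
  have e2: "e \<le> d/(2*(a+1)^2)" using e by auto
  have "a * e \<le> a * (1/(a+1))" using e1 a by (intro mult_left_mono) auto
  also have "\<dots> \<le> 1" using a by (simp add: field_simps)
  finally show "a * e \<le> 1" .
  have ep: "e > 0" using a d r e by auto
  have "(a*e)^2 \<le> ((a+1)*e)^2" using a ep by (intro power_mono) auto
  also have "\<dots> = ((a+1)^2 * e) * e" by (simp add: power2_eq_square)
  also have "\<dots> \<le> ((a+1)^2 * (d/(2*(a+1)^2))) * e"
    using e2 ep by (intro mult_right_mono mult_left_mono) auto
  also have "\<dots> = d/2 * e" using a by (simp add: field_simps)
  also have "\<dots> < d * e" using d ep by simp
  finally show "(a*e)^2 < d * e" .
qed

lemma aux_eps2:
  fixes a d r :: real
  assumes a: "a \<ge> 0" and d: "d > 0" and r: "r > 0"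
    and e: "e = min r (min (1/(2*(a+1))) (d/(4*(a+1)^2)))"
  shows "e > 0" "e \<le> r" "a * e \<le> 1/2" "2*(a*e)^2 < d * e"
proof -
  show "e > 0" using a d r e by auto
  show "e \<le> r" using e by auto
  have e1: "e \<le> 1/(2*(a+1))" using e by auto
  have e2: "e \<le> d/(4*(a+1)^2)" using e by auto
  have "a * e \<le> a * (1/(2*(a+1)))" using e1 a by (intro mult_left_mono) auto
  also have "\<dots> \<le> 1/2" using a by (simp add: field_simps)
  finally show "a * e \<le> 1/2" .
  have ep: "e > 0" using a d r e by auto
  have "(a*e)^2 \<le> ((a+1)*e)^2" using a ep by (intro power_mono) auto
  also have "\<dots> = ((a+1)^2 * e) * e" by (simp add: power2_eq_square)
  also have "\<dots> \<le> ((a+1)^2 * (d/(4*(a+1)^2))) * e"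
    using e2 ep by (intro mult_right_mono mult_left_mono) auto
  also have "\<dots> = d/4 * e" using a by (simp add: field_simps)
  finally have "(a*e)^2 \<le> d/4 * e" .
  moreover have "d * e > 0" using d ep by simp
  ultimately show "2*(a*e)^2 < d * e" by linarith
qed

lemma sum_upd:
  fixes f p :: "'k::finite \<Rightarrow> real"
  shows "(\<Sum>j\<in>UNIV. f j * (p(k := v)) j) = (\<Sum>j\<in>UNIV. f j * p j) + f k * (v - p k)"
proof -
  have "(\<Sum>j\<in>UNIV. f j * (p(k := v)) j) - (\<Sum>j\<in>UNIV. f j * p j)
      = (\<Sum>j\<in>UNIV. f j * (p(k := v)) j - f j * p j)" by (simp add: sum_subtractf)
  also have "\<dots> = (\<Sum>j\<in>UNIV. if j = k then f k * (v - p k) else 0)"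
    by (rule sum.cong) (auto simp: algebra_simps)
  also have "\<dots> = f k * (v - p k)" by simp
  finally show ?thesis by simp
qed

lemma sum_upd2:
  fixes f p :: "'k::finite \<Rightarrow> real"
  shows "(\<Sum>j\<in>UNIV. f j * ((p(k := v)) j - p j)) = f k * (v - p k)"
proof -
  have "(\<Sum>j\<in>UNIV. f j * ((p(k := v)) j - p j)) = (\<Sum>j\<in>UNIV. if j = k then f k * (v - p k) else 0)"
    by (rule sum.cong) (auto simp: algebra_simps)
  also have "\<dots> = f k * (v - p k)" by simp
  finally show ?thesis .
qed

lemma opt_kkt:
  assumes h: "\<forall>k. h k \<ge> 0" and c: "\<forall>k. c k \<ge> 0" and o: "opt P h c p"
  shows "KKT P h c p"
  unfolding KKT_def
proof (intro allI conjI impI)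
  fix k
  have pf: "feasible P p" and po: "\<And>q. feasible P q \<Longrightarrow> FF h c q \<le> FF h c p"
    using o unfolding opt_def by auto
  define S where "S = SS h p"
  have S1: "S \<ge> 1" unfolding S_def using SS_ge1[OF h pf] .
  define a where "a = h k / S"
  have a0: "a \<ge> 0" unfolding a_def using h S1 by simp
  have hk: "h k = a * S" unfolding a_def using S1 by simp
  have pk: "0 \<le> p k" "p k \<le> P k" using pf unfolding feasible_def by auto
  {
    assume d: "h k / SS h p - c k > 0"
    show "p k = P k"
    proof (rule ccontr)
      assume "p k \<noteq> P k"
      then have r: "P k - p k > 0" using pk by simp
      define e where "e = min (P k - p k) (min (1/(a+1)) ((a - c k)/(2*(a+1)^2)))"
      have dd: "a - c k > 0" using d unfolding a_def S_def by simp
      note E = aux_eps1[OF a0 dd r e_def]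
      define q where "q = p(k := p k + e)"
      have qf: "feasible P q" using pf E unfolding q_def feasible_def by auto
      have Sq: "SS h q = S + h k * e" unfolding q_def SS_def S_def sum_upd by simp
      have Bq: "(\<Sum>j\<in>UNIV. (h j / SS h p - c j) * (q j - p j)) = (a - c k) * e"
        unfolding q_def sum_upd2 by (simp add: a_def S_def)
      have "ln (SS h q) - ln (SS h p) = ln (1 + a * e)"
      proof -
        have "SS h q / SS h p = 1 + a * e" using Sq S1 hk unfolding S_def by (simp add: field_simps)
        moreover have "SS h q > 0" using SS_ge1[OF h qf] by simp
        ultimately show ?thesis using S1 ln_divide_pos[of "SS h q" "SS h p"] by (simp add: S_def)
      qed
      moreover have "(SS h q - SS h p) / SS h p = a * e" using Sq hk S1 by (simp add: S_def)
      ultimately have "FF h c q - FF h c p = ln (1 + a * e) - a * e + (a - c k) * e"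
        using FF_diff[of h p c q] S1 Bq by (simp add: S_def)
      moreover have "a * e - (a*e)^2 \<le> ln (1 + a * e)"
        using ln_one_plus_pos_lower_bound[of "a*e"] E a0 by simp
      ultimately have "FF h c q - FF h c p > 0" using E by (simp add: algebra_simps)
      then show False using po[OF qf] by simp
    qed
  }
  {
    assume d: "h k / SS h p - c k < 0"
    show "p k = 0"
    proof (rule ccontr)
      assume "p k \<noteq> 0"
      then have r: "p k > 0" using pk by simp
      define e where "e = min (p k) (min (1/(2*(a+1))) ((c k - a)/(4*(a+1)^2)))"
      have dd: "c k - a > 0" using d unfolding a_def S_def by simp
      note E = aux_eps2[OF a0 dd r e_def]
      define q where "q = p(k := p k - e)"
      have qf: "feasible P q" using pf E unfolding q_def feasible_def by (auto, smt (verit))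
      have Sq: "SS h q = S - h k * e" unfolding q_def SS_def S_def sum_upd by simp
      have Bq: "(\<Sum>j\<in>UNIV. (h j / SS h p - c j) * (q j - p j)) = (c k - a) * e"
        unfolding q_def sum_upd2 by (simp add: a_def S_def algebra_simps)
      have "ln (SS h q) - ln (SS h p) = ln (1 - a * e)"
      proof -
        have "SS h q / SS h p = 1 - a * e" using Sq S1 hk unfolding S_def by (simp add: field_simps)
        moreover have "SS h q > 0" using SS_ge1[OF h qf] by simp
        ultimately show ?thesis using S1 ln_divide_pos[of "SS h q" "SS h p"] by (simp add: S_def)
      qed
      moreover have "(SS h q - SS h p) / SS h p = - (a * e)" using Sq hk S1 by (simp add: S_def)
      ultimately have "FF h c q - FF h c p = ln (1 - a * e) + a * e + (c k - a) * e"
        using FF_diff[of h p c q] S1 Bq by (simp add: S_def)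
      moreover have "- (a*e) - 2 * (a*e)^2 \<le> ln (1 - a * e)"
        using ln_one_minus_pos_lower_bound[of "a*e"] E a0 by simp
      ultimately have "FF h c q - FF h c p > 0" using E by (simp add: algebra_simps)
      then show False using po[OF qf] by simp
    qed
  }
qed

lemma opt_exists:
  fixes h :: "'k::finite \<Rightarrow> real"
  assumes h: "\<forall>k. h k \<ge> 0" and P: "\<forall>k. P k \<ge> 0"
  shows "\<exists>p. opt P h c p"
proof -
  define B where "B = cbox (0::real^'k) (\<chi> k. P k)"
  have fB: "\<And>x. x \<in> B \<longleftrightarrow> feasible P (\<lambda>k. x $ k)"
    unfolding B_def feasible_def by (auto simp: mem_box_cart)
  have cont: "continuous_on B (\<lambda>x. FF h c (\<lambda>k. x $ k))"
  proof -
    have SSB: "\<And>x. x \<in> B \<Longrightarrow> 1 + (\<Sum>k\<in>UNIV. h k * x $ k) \<ge> 1"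
      using SS_ge1[OF h] fB unfolding SS_def by blast
    show ?thesis unfolding FF_def SS_def
      by (intro continuous_intros) (auto dest!: SSB)
  qed
  have "0 \<in> B" unfolding B_def using P by (auto simp: mem_box_cart)
  then have "B \<noteq> {}" by blast
  then obtain x where x: "x \<in> B" "\<forall>y\<in>B. FF h c (\<lambda>k. y $ k) \<le> FF h c (\<lambda>k. x $ k)"
    using continuous_attains_sup[OF _ _ cont] unfolding B_def by (auto simp: compact_cbox)
  show ?thesis
  proof (intro exI[of _ "\<lambda>k. x $ k"])
    show "opt P h c (\<lambda>k. x $ k)" unfolding opt_def
    proof (intro conjI allI impI)
      show "feasible P (\<lambda>k. x $ k)" using x fB by blast
      fix q assume "feasible P q"
      then have "(\<chi> k. q k) \<in> B" using fB by simp
      then show "FF h c q \<le> FF h c (\<lambda>k. x $ k)" using x(2) by fastforce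
    qed
  qed
qed

lemma dsign:
  fixes h c S :: real
  assumes "S > 0" "c > 0"
  shows "(h/S - c > 0) = (h/c > S)" "(h/S - c < 0) = (h/c < S)" "(h/S - c = 0) = (h/c = S)"
  using assms by (auto simp: field_simps)

lemma sum_single:
  fixes h :: "'k::finite \<Rightarrow> real"
  assumes "\<forall>k. k \<noteq> u \<longrightarrow> p k = 0"
  shows "(\<Sum>k\<in>UNIV. h k * p k) = h u * p u"
proof -
  have "(\<Sum>k\<in>UNIV. h k * p k) = (\<Sum>k\<in>UNIV. if k = u then h u * p u else 0)"
    by (rule sum.cong) (use assms in auto)
  then show ?thesis by simp
qed

lemma det_main:
  fixes h c P :: "'k::finite \<Rightarrow> real" and \<pi> :: "nat \<Rightarrow> 'k"
  assumes K2: "CARD('k) \<ge> 2" and hp: "\<forall>k. h k > 0" and Pp: "\<forall>k. P k > 0"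
    and cs: "(\<forall>k. c k = 0) \<or> ((\<forall>k. c k > 0) \<and> (\<forall>k j. k \<noteq> j \<longrightarrow> h k * c j \<noteq> h j * c k))"
    and bij: "bij_betw \<pi> {..<CARD('k)} UNIV"
    and sorted: "\<forall>i j. i \<le> j \<longrightarrow> j < CARD('k) \<longrightarrow> eratio (h (\<pi> j)) (c (\<pi> j)) \<le> eratio (h (\<pi> i)) (c (\<pi> i))"
  shows "(((\<forall>p. opt P h c p \<longrightarrow> card {k. p k > 0} \<le> 1) \<longleftrightarrow> ereal (1 + h (\<pi> 0) * P (\<pi> 0)) \<ge> eratio (h (\<pi> 1)) (c (\<pi> 1)))
    \<and> (ereal (1 + h (\<pi> 0) * P (\<pi> 0)) \<ge> eratio (h (\<pi> 1)) (c (\<pi> 1)) \<longrightarrow>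
       (\<forall>p. opt P h c p \<longleftrightarrow> p = (\<lambda>k. if k = \<pi> 0 then min (P (\<pi> 0)) (max 0 (1 / c (\<pi> 0) - 1 / h (\<pi> 0))) else 0))))"
proof -
  have h0: "\<forall>k. h k \<ge> 0" using hp less_imp_le by blast
  from cs show ?thesis
  proof
    assume c0: "\<forall>k. c k = 0"
    have pf: "feasible P P" unfolding feasible_def using Pp less_imp_le by blast
    have "KKT P h c P" unfolding KKT_def
    proof (intro allI conjI impI)
      fix k
      show "P k = P k" by simp
      assume "h k / SS h P - c k < 0"
      moreover have "SS h P \<ge> 1" using SS_ge1[OF h0 pf] .
      ultimately show "P k = 0" using c0 hp[rule_format, of k] by (simp add: divide_less_0_iff)
    qed
    then have oP: "opt P h c P" using kkt_opt[OF h0 pf] by blast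
    have "{k. P k > 0} = UNIV" using Pp by auto
    then have "\<not> card {k. P k > 0} \<le> 1" using K2 by simp
    then have L: "\<not> (\<forall>p. opt P h c p \<longrightarrow> card {k. p k > 0} \<le> 1)" using oP by blast
    have "eratio (h (\<pi> 1)) (c (\<pi> 1)) = \<infinity>" using c0 hp unfolding eratio_def by simp
    then show ?thesis using L by simp
  next
    assume cB: "(\<forall>k. c k > 0) \<and> (\<forall>k j. k \<noteq> j \<longrightarrow> h k * c j \<noteq> h j * c k)"
    then have cp: "\<forall>k. c k > 0" and nt: "\<forall>k j. k \<noteq> j \<longrightarrow> h k * c j \<noteq> h j * c k" by auto
    have c0: "\<forall>k. c k \<ge> 0" using cp less_imp_le by blast
    define r where "r k = h k / c k" for k
    have er: "\<And>k. eratio (h k) (c k) = ereal (r k)"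
    proof -
      fix k have "c k \<noteq> 0" using cp[rule_format, of k] by simp
      then show "eratio (h k) (c k) = ereal (r k)" unfolding eratio_def r_def by simp
    qed
    have rdist: "\<And>k j. k \<noteq> j \<Longrightarrow> r k \<noteq> r j"
    proof
      fix k j assume "k \<noteq> j" "r k = r j"
      then have "h k * c j = h j * c k" unfolding r_def using cp[rule_format, of k] cp[rule_format, of j]
        by (simp add: field_simps)
      then show False using nt \<open>k \<noteq> j\<close> by blast
    qed
    define u where "u = \<pi> 0"
    define v where "v = \<pi> 1"
    have inj: "inj_on \<pi> {..<CARD('k)}" and surj: "\<pi> ` {..<CARD('k)} = UNIV"
      using bij unfolding bij_betw_def by auto
    have uv: "u \<noteq> v"
    proof
      assume "u = v"
      then have "\<pi> 0 = \<pi> 1" unfolding u_def v_def .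
      moreover have "(0::nat) \<in> {..<CARD('k)}" "(1::nat) \<in> {..<CARD('k)}" using K2 by auto
      ultimately show False using inj_onD[OF inj, of 0 1] by simp
    qed
    have rs: "\<And>i j. i \<le> j \<Longrightarrow> j < CARD('k) \<Longrightarrow> r (\<pi> j) \<le> r (\<pi> i)"
      using sorted er by simp
    have ru: "\<And>k. r k \<le> r u"
    proof -
      fix k
      obtain i where "i < CARD('k)" "k = \<pi> i" using surj by (metis UNIV_I imageE lessThan_iff)
      then show "r k \<le> r u" unfolding u_def using rs[of 0 i] by simp
    qed
    have rv: "\<And>k. k \<noteq> u \<Longrightarrow> r k \<le> r v"
    proof -
      fix k assume "k \<noteq> u"
      obtain i where i: "i < CARD('k)" "k = \<pi> i" using surj by (metis UNIV_I imageE lessThan_iff)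
      have "i \<noteq> 0" proof assume "i = 0" then show False using i \<open>k \<noteq> u\<close> unfolding u_def by simp qed
      then show "r k \<le> r v" unfolding v_def using rs[of 1 i] i by simp
    qed
    have ru_strict: "\<And>k. k \<noteq> u \<Longrightarrow> r k < r u" using ru rdist by (meson order_le_neq_trans)
    have cond_iff: "(ereal (1 + h u * P u) \<ge> eratio (h v) (c v)) = (1 + h u * P u \<ge> r v)"
      using er by simp
    have dS: "\<And>k S. S > 0 \<Longrightarrow> (h k/S - c k > 0) = (r k > S) \<and> (h k/S - c k < 0) = (r k < S) \<and> (h k/S - c k = 0) = (r k = S)"
    proof -
      fix k and S :: real assume S: "S > 0"
      show "(h k/S - c k > 0) = (r k > S) \<and> (h k/S - c k < 0) = (r k < S) \<and> (h k/S - c k = 0) = (r k = S)"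
        using dsign[OF S cp[rule_format, of k], of "h k"] unfolding r_def by simp
    qed
    have eqs: "\<pi> 0 = u" "\<pi> 1 = v" by (simp_all add: u_def v_def)
    show ?thesis
    proof (cases "1 + h u * P u \<ge> r v")
      case cond: True
      define x where "x = 1 / c u - 1 / h u"
      define t where "t = (\<lambda>k. if k = u then min (P u) (max 0 x) else 0)"
      have Pu0[simp]: "min (P u) 0 = 0" using Pp[rule_format, of u] by simp
      have x1: "1 + h u * x = r u" unfolding x_def r_def using hp[rule_format, of u] cp[rule_format, of u]
        by (simp add: field_simps)
      have x2: "x > 0 \<longleftrightarrow> r u > 1" unfolding x_def r_def using hp[rule_format, of u] cp[rule_format, of u]
        by (simp add: field_simps)
      have tf: "feasible P t" unfolding t_def feasible_def using Pp less_imp_le by auto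
      have St: "SS h t = 1 + h u * t u" unfolding SS_def by (subst sum_single[of u]) (auto simp: t_def)
      have Spos: "SS h t > 0" using SS_ge1[OF h0 tf] by simp
      have oth: "\<And>k. k \<noteq> u \<Longrightarrow> \<not> (h k / SS h t - c k > 0)"
      proof -
        fix k assume ku: "k \<noteq> u"
        have "r u \<le> SS h t \<or> t u = P u"
        proof (cases "x \<le> 0")
          case True then have "t u = 0" unfolding t_def by simp
          then show ?thesis using True x2 St by auto
        next
          case False
          show ?thesis
          proof (cases "x \<le> P u")
            case True then have "t u = x" using False unfolding t_def by simp
            then show ?thesis using St x1 by simp
          qed (auto simp: t_def)
        qed
        moreover have "t u = P u \<Longrightarrow> r k \<le> SS h t" using St rv[OF ku] cond by simp
        ultimately have "r k \<le> SS h t" using ru[of k] by auto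
        then show "\<not> (h k / SS h t - c k > 0)" using dS[OF Spos] by simp
      qed
      have Kt: "KKT P h c t" unfolding KKT_def
      proof (intro allI conjI impI)
        fix k
        assume d: "h k / SS h t - c k > 0"
        then have "k = u" using oth by blast
        then have gt: "r u > SS h t" using d dS[OF Spos] by simp
        show "t k = P k"
        proof (cases "x \<le> 0")
          case True then have "t u = 0" unfolding t_def by simp
          then show ?thesis using True x2 St gt by auto
        next
          case False
          show ?thesis
          proof (cases "x \<le> P u")
            case True then have "t u = x" using False unfolding t_def by simp
            then show ?thesis using St x1 gt by simp
          qed (auto simp: t_def \<open>k = u\<close>)
        qed
      next
        fix k
        assume d: "h k / SS h t - c k < 0"
        show "t k = 0"
        proof (cases "k = u")
          case False then show ?thesis unfolding t_def by simp
        next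
          case True
          then have lt: "r u < SS h t" using d dS[OF Spos] by simp
          show ?thesis
          proof (cases "x \<le> 0")
            case True then show ?thesis unfolding t_def \<open>k = u\<close> by simp
          next
            case False
            show ?thesis
            proof (cases "x \<le> P u")
              case True then have "t u = x" using False unfolding t_def by simp
              then show ?thesis using St x1 lt by simp
            next
              case False2: False
              then have "t u = P u" using False unfolding t_def by simp
              moreover have "h u * P u < h u * x" using False2 hp by simp
              ultimately show ?thesis using St x1 lt by simp
            qed
          qed
        qed
      qed
      have ot: "opt P h c t" using kkt_opt[OF h0 tf Kt] .
      have uniq: "\<And>p. opt P h c p \<longleftrightarrow> p = t"
      proof
        fix p assume "opt P h c p"
        then show "p = t"
        proof (rule kkt_unique[OF hp tf Kt])
          show "\<forall>k j. h k / SS h t - c k = 0 \<longrightarrow> h j / SS h t - c j = 0 \<longrightarrow> k = j"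
          proof (intro allI impI)
            fix k j assume "h k / SS h t - c k = 0" "h j / SS h t - c j = 0"
            then have "r k = r j" using dS[OF Spos, of k] dS[OF Spos, of j] by simp
            then show "k = j" using rdist by blast
          qed
        qed
      qed (use ot in simp)
      have "card {k. t k > 0} \<le> 1"
      proof -
        have "{k. t k > 0} \<subseteq> {u}" unfolding t_def by auto
        then have "card {k. t k > 0} \<le> card {u}" by (intro card_mono) auto
        then show ?thesis by simp
      qed
      then have L: "\<forall>p. opt P h c p \<longrightarrow> card {k. p k > 0} \<le> 1"
      proof (intro allI impI)
        fix p assume "card {k. t k > 0} \<le> 1" "opt P h c p"
        then show "card {k. p k > 0} \<le> 1" using uniq[of p] by simp
      qed
      have te: "t = (\<lambda>k. if k = u then min (P u) (max 0 (1 / c u - 1 / h u)) else 0)"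
        unfolding t_def x_def by simp
      have R: "\<forall>p. opt P h c p \<longleftrightarrow> p = (\<lambda>k. if k = u then min (P u) (max 0 (1 / c u - 1 / h u)) else 0)"
        using uniq unfolding te by simp
      show ?thesis unfolding eqs cond_iff using cond L R by simp
    next
      case ncond: False
      have P0: "\<forall>k. P k \<ge> 0" using Pp less_imp_le by blast
      obtain p where op: "opt P h c p" using opt_exists[OF h0 P0] by blast
      have pf: "feasible P p" using op unfolding opt_def by blast
      have Kp: "KKT P h c p" using opt_kkt[OF h0 c0 op] .
      have Spos: "SS h p > 0" using SS_ge1[OF h0 pf] by simp
      have pnn: "\<And>k. p k \<ge> 0" using pf unfolding feasible_def by auto
      have "\<not> card {k. p k > 0} \<le> 1"
      proof
        assume "card {k. p k > 0} \<le> 1"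
        then have one: "\<And>a b. p a > 0 \<Longrightarrow> p b > 0 \<Longrightarrow> a = b"
          using card_le_Suc0_iff_eq[of "{k. p k > 0}"] by auto
        show False
        proof (cases "\<exists>j. j \<noteq> u \<and> p j > 0")
          case True
          then obtain j where j: "j \<noteq> u" "p j > 0" by blast
          have pu: "p u = 0"
          proof (rule ccontr)
            assume "p u \<noteq> 0" then have "p u > 0" using pnn[of u] by simp
            then show False using one[of j u] j by simp
          qed
          have "\<not> (h u / SS h p - c u > 0)"
          proof
            assume "h u / SS h p - c u > 0"
            then have "p u = P u" using Kp unfolding KKT_def by blast
            then show False using pu Pp[rule_format, of u] by simp
          qed
          then have a: "r u \<le> SS h p" using dS[OF Spos] by (meson not_less)
          have "\<not> (h j / SS h p - c j < 0)"
          proof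
            assume "h j / SS h p - c j < 0"
            then have "p j = 0" using Kp unfolding KKT_def by blast
            then show False using j by simp
          qed
          then have b: "SS h p \<le> r j" using dS[OF Spos] by (meson not_less)
          show False using a b ru_strict[OF j(1)] by simp
        next
          case False
          then have "\<forall>k. k \<noteq> u \<longrightarrow> p k = 0" using pnn by (meson antisym not_less)
          then have Sp: "SS h p = 1 + h u * p u" unfolding SS_def by (subst sum_single[of u]) auto
          have "h u * p u \<le> h u * P u" using pf hp unfolding feasible_def by (simp add: mult_left_mono less_imp_le)
          then have "r v > SS h p" using ncond Sp by simp
          then have "h v / SS h p - c v > 0" using dS[OF Spos] by blast
          then have "p v = P v" using Kp unfolding KKT_def by blast
          then have "p v > 0" using Pp by simp
          then show False using False uv by auto
        qed
      qed
      then have "\<not> (\<forall>p. opt P h c p \<longrightarrow> card {k. p k > 0} \<le> 1)" using op by blast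
      then show ?thesis unfolding eqs cond_iff using ncond by simp
    qed
  qed
qed

lemma gains_Inl[simp]: "gains h g (Inl k) = (\<lambda>\<omega>. h \<omega> $ k)" by (simp add: gains_def)
lemma gains_Inr[simp]: "gains h g (Inr km) = (\<lambda>\<omega>. g \<omega> $ km)" by (simp add: gains_def)

lemma (in prob_space) gains_atomless:
  fixes h :: "'a \<Rightarrow> real^'k::finite" and g :: "'a \<Rightarrow> real^('k \<times> 'm::finite)"
  assumes rv: "\<And>i. gains h g i \<in> borel_measurable M"
    and cont: "continuous_on UNIV (joint_cdf M h g)"
  shows "measure M {\<omega>\<in>space M. gains h g i \<omega> = a} = 0"
proof -
  define X where "X = gains h g"
  have [measurable]: "\<And>i. X i \<in> borel_measurable M" using rv unfolding X_def by simp
  define w where "w t (N::nat) j = (if j = i then t else real N)" for t N j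
  define z where "z t N = ((\<chi> k. w t N (Inl k)), (\<chi> km. w t N (Inr km)))" for t N
  define A where "A t N = {\<omega>\<in>space M. \<forall>j. X j \<omega> \<le> w t N j}" for t N
  have Aset[measurable]: "A t N \<in> sets M" for t N unfolding A_def by measurable
  have GA: "joint_cdf M h g (z t N) = measure M (A t N)" for t N
  proof -
    have "{\<omega>\<in>space M. (\<forall>k. h \<omega> $ k \<le> fst (z t N) $ k) \<and> (\<forall>i. g \<omega> $ i \<le> snd (z t N) $ i)} = A t N"
      unfolding A_def z_def X_def by (auto simp: split_sum_all)
    then show ?thesis unfolding joint_cdf_def by simp
  qed
  have contz: "continuous_on UNIV (\<lambda>t. joint_cdf M h g (z t N))" for N
  proof -
    have cc: "continuous_on UNIV (\<lambda>t. w t N j)" for j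
      by (cases "j = i") (auto simp: w_def intro: continuous_intros)
    have c1: "continuous_on UNIV (\<lambda>t. z t N)" unfolding z_def
      by (intro continuous_intros cc)
    show ?thesis using continuous_on_compose2[OF cont c1] by simp
  qed
  define E where "E N = {\<omega>\<in>space M. X i \<omega> = a \<and> (\<forall>j. j \<noteq> i \<longrightarrow> X j \<omega> \<le> real N)}" for N
  have Eset[measurable]: "E N \<in> sets M" for N unfolding E_def by measurable
  have E0: "measure M (E N) = 0" for N
  proof -
    define t where "t n = a - inverse (real (Suc n))" for n
    have tl: "t \<longlonglongrightarrow> a" unfolding t_def
      using tendsto_diff[OF tendsto_const LIMSEQ_inverse_real_of_nat, of a] by simp
    have lim: "(\<lambda>n. joint_cdf M h g (z (t n) N)) \<longlonglongrightarrow> joint_cdf M h g (z a N)"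
      using continuous_on_tendsto_compose[OF contz tl] by simp
    have bound: "measure M (E N) \<le> measure M (A a N) - measure M (A (t n) N)" for n
    proof -
      have tn: "t n < a" unfolding t_def by simp
      have sub: "A (t n) N \<subseteq> A a N" unfolding A_def w_def using tn by auto
      have "E N \<subseteq> A a N - A (t n) N" unfolding E_def A_def w_def using tn by auto
      then have "measure M (E N) \<le> measure M (A a N - A (t n) N)"
        by (intro finite_measure_mono) auto
      also have "\<dots> = measure M (A a N) - measure M (A (t n) N)"
        using sub by (intro finite_measure_Diff) auto
      finally show ?thesis .
    qed
    have lim2: "(\<lambda>n. measure M (A a N) - measure M (A (t n) N)) \<longlonglongrightarrow> 0"
      using tendsto_diff[OF tendsto_const lim, of "joint_cdf M h g (z a N)"] unfolding GA by simp
    have "measure M (E N) \<le> 0"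
      using LIMSEQ_le_const[OF lim2] bound by blast
    then show ?thesis using measure_nonneg[of M "E N"] by simp
  qed
  have inc: "incseq E" unfolding incseq_def E_def by (auto intro: order_trans)
  have ex: "\<exists>N. \<omega> \<in> E N" if "\<omega> \<in> space M" "X i \<omega> = a" for \<omega>
  proof -
    obtain N :: nat where N: "Max (range (\<lambda>j. X j \<omega>)) \<le> real N" using real_arch_simple by blast
    have "\<forall>j. X j \<omega> \<le> real N"
    proof
      fix j have "X j \<omega> \<le> Max (range (\<lambda>j. X j \<omega>))" by (rule Max_ge) auto
      then show "X j \<omega> \<le> real N" using N by linarith
    qed
    then show ?thesis unfolding E_def using that by auto
  qed
  have U: "(\<Union>N. E N) = {\<omega>\<in>space M. X i \<omega> = a}"
    using ex by (auto simp: E_def)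
  have "(\<lambda>N. measure M (E N)) \<longlonglongrightarrow> measure M (\<Union>N. E N)"
    by (rule finite_Lim_measure_incseq) (use inc in auto)
  then have "(\<lambda>N. 0::real) \<longlonglongrightarrow> measure M {\<omega>\<in>space M. X i \<omega> = a}" unfolding U E0 .
  then show ?thesis unfolding X_def using LIMSEQ_unique tendsto_const by blast
qed

lemma (in prob_space) indep_neq:
  fixes X Y :: "'a \<Rightarrow> real"
  assumes ind: "indep_var borel Y borel X" and at: "\<And>a. measure M {\<omega>\<in>space M. X \<omega> = a} = 0"
  shows "AE \<omega> in M. Y \<omega> \<noteq> X \<omega>"
proof -
  have rvY[measurable]: "Y \<in> borel_measurable M" using indep_var_rv1[OF ind] by simp
  have rvX[measurable]: "X \<in> borel_measurable M" using indep_var_rv2[OF ind] by simp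
  define D where "D = {p::real\<times>real. fst p = snd p}"
  have Dset: "D \<in> sets (borel \<Otimes>\<^sub>M borel)"
  proof -
    have "{p \<in> space (borel \<Otimes>\<^sub>M borel). fst p = (snd p::real)} \<in> sets (borel \<Otimes>\<^sub>M borel)" by measurable
    then show ?thesis unfolding D_def by (simp add: space_pair_measure)
  qed
  have eq: "distr M borel Y \<Otimes>\<^sub>M distr M borel X = distr M (borel \<Otimes>\<^sub>M borel) (\<lambda>x. (Y x, X x))"
    using ind unfolding indep_var_distribution_eq by blast
  interpret PX: prob_space "distr M borel X" by (rule prob_space_distr) simp
  have "emeasure M {\<omega>\<in>space M. Y \<omega> = X \<omega>} = emeasure (distr M (borel \<Otimes>\<^sub>M borel) (\<lambda>x. (Y x, X x))) D"
    using Dset by (subst emeasure_distr) (auto simp: D_def intro!: arg_cong[where f="emeasure M"])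
  also have "\<dots> = emeasure (distr M borel Y \<Otimes>\<^sub>M distr M borel X) D" using eq by simp
  also have "\<dots> = (\<integral>\<^sup>+y. emeasure (distr M borel X) (Pair y -` D) \<partial>distr M borel Y)"
  proof -
    have "sets (distr M borel Y \<Otimes>\<^sub>M distr M borel X) = sets (borel \<Otimes>\<^sub>M borel)"
      by (intro sets_pair_measure_cong) simp_all
    then show ?thesis using Dset by (intro PX.emeasure_pair_measure_alt) simp
  qed
  also have "\<dots> = (\<integral>\<^sup>+y. 0 \<partial>distr M borel Y)"
  proof (rule nn_integral_cong)
    fix y :: real
    have "Pair y -` D = {y}" unfolding D_def by auto
    then have "emeasure (distr M borel X) (Pair y -` D) = emeasure M (X -` {y} \<inter> space M)"
      by (simp add: emeasure_distr)
    also have "X -` {y} \<inter> space M = {\<omega>\<in>space M. X \<omega> = y}" by auto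
    also have "emeasure M \<dots> = 0" using at[of y] by (simp add: emeasure_eq_measure)
    finally show "emeasure (distr M borel X) (Pair y -` D) = 0" .
  qed
  also have "\<dots> = 0" by simp
  finally have "emeasure M {\<omega>\<in>space M. Y \<omega> = X \<omega>} = 0" .
  then have "measure M {\<omega>\<in>space M. Y \<omega> = X \<omega>} = 0" by (simp add: measure_def)
  moreover have "{\<omega>\<in>space M. Y \<omega> = X \<omega>} \<in> sets M" by measurable
  ultimately show ?thesis using prob_Collect_eq_0[of "\<lambda>\<omega>. Y \<omega> = X \<omega>"] by simp
qed

lemma obj_eq: "objective mu hv gv p = FF (\<lambda>k. hv $ k) (wgain mu gv) p"
proof -
  have "(\<Sum>m\<in>UNIV. mu m * (\<Sum>k\<in>UNIV. gv $ (k, m) * p k)) = (\<Sum>m\<in>UNIV. \<Sum>k\<in>UNIV. mu m * gv $ (k, m) * p k)"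
    by (simp add: sum_distrib_left mult.assoc)
  also have "\<dots> = (\<Sum>k\<in>UNIV. \<Sum>m\<in>UNIV. mu m * gv $ (k, m) * p k)" by (rule sum.swap)
  also have "\<dots> = (\<Sum>k\<in>UNIV. wgain mu gv k * p k)" by (simp add: wgain_def sum_distrib_right)
  finally show ?thesis unfolding objective_def FF_def SS_def by simp
qed

lemma opt_eq: "optimal_power mu Pst hv gv p \<longleftrightarrow> opt Pst (\<lambda>k. hv $ k) (wgain mu gv) p"
  unfolding optimal_power_def opt_def obj_eq ..

lemma tdma_eq:
  assumes "wgain mu gv u > 0" "hv $ u > 0"
  shows "tdma_power mu Pst hv gv u = (\<lambda>k. if k = u then min (Pst u) (max 0 (1 / wgain mu gv u - 1 / hv $ u)) else 0)"
proof -
  have e1: "einv (wgain mu gv u) - einv (hv $ u) = ereal (1 / wgain mu gv u - 1 / hv $ u)"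
    using assms by (simp add: einv_def)
  have e2: "max 0 (ereal x) = ereal (max 0 x)" for x :: real by (cases "0 \<le> x") (auto simp: max_def)
  have e3: "min (ereal a) (ereal b) = ereal (min a b)" for a b :: real by (cases "a \<le> b") (auto simp: min_def)
  have "min (ereal (Pst u)) (max 0 (einv (wgain mu gv u) - einv (hv $ u)))
     = ereal (min (Pst u) (max 0 (1 / wgain mu gv u - 1 / hv $ u)))"
    unfolding e1 by (simp only: e2 e3)
  then show ?thesis unfolding tdma_power_def real_of_ereal.simps by (simp only: real_of_ereal.simps)
qed

lemma final_det:
  fixes hv :: "real^'k::finite" and gv :: "real^('k \<times> 'm::finite)" and mu :: "'m \<Rightarrow> real"
  assumes K2: "CARD('k) \<ge> 2" and Pp: "\<forall>k. Pst k > 0" and hp: "\<forall>k. hv $ k > 0"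
    and cs: "(\<forall>k. wgain mu gv k = 0) \<or> ((\<forall>k. wgain mu gv k > 0) \<and> (\<forall>k j. k \<noteq> j \<longrightarrow> hv $ k * wgain mu gv j \<noteq> hv $ j * wgain mu gv k))"
  shows "\<forall>\<pi>. sorted_perm mu hv gv \<pi> \<longrightarrow>
           (((\<forall>p. optimal_power mu Pst hv gv p \<longrightarrow> card {k. p k > 0} \<le> 1)
              \<longleftrightarrow> ereal (1 + hv $ \<pi> 0 * Pst (\<pi> 0))
                    \<ge> eratio (hv $ \<pi> 1) (wgain mu gv (\<pi> 1)))
            \<and> (ereal (1 + hv $ \<pi> 0 * Pst (\<pi> 0))
                    \<ge> eratio (hv $ \<pi> 1) (wgain mu gv (\<pi> 1))
               \<longrightarrow> (\<forall>p. optimal_power mu Pst hv gv p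
                        \<longleftrightarrow> p = tdma_power mu Pst hv gv (\<pi> 0))))"
proof (intro allI impI)
  fix \<pi> assume sp: "sorted_perm mu hv gv \<pi>"
  have bij: "bij_betw \<pi> {..<CARD('k)} UNIV" using sp unfolding sorted_perm_def by blast
  have so: "\<forall>i j. i \<le> j \<longrightarrow> j < CARD('k) \<longrightarrow> eratio (hv $ \<pi> j) (wgain mu gv (\<pi> j)) \<le> eratio (hv $ \<pi> i) (wgain mu gv (\<pi> i))"
    using sp unfolding sorted_perm_def by blast
  note D = det_main[of "\<lambda>k. hv $ k" Pst "wgain mu gv" \<pi>, OF K2 hp Pp cs bij so]
  from cs show "((\<forall>p. optimal_power mu Pst hv gv p \<longrightarrow> card {k. p k > 0} \<le> 1)
              \<longleftrightarrow> ereal (1 + hv $ \<pi> 0 * Pst (\<pi> 0))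
                    \<ge> eratio (hv $ \<pi> 1) (wgain mu gv (\<pi> 1)))
            \<and> (ereal (1 + hv $ \<pi> 0 * Pst (\<pi> 0))
                    \<ge> eratio (hv $ \<pi> 1) (wgain mu gv (\<pi> 1))
               \<longrightarrow> (\<forall>p. optimal_power mu Pst hv gv p
                        \<longleftrightarrow> p = tdma_power mu Pst hv gv (\<pi> 0)))"
  proof
    assume c0: "\<forall>k. wgain mu gv k = 0"
    have "eratio (hv $ \<pi> 1) (wgain mu gv (\<pi> 1)) = \<infinity>" using c0 hp unfolding eratio_def by simp
    then show ?thesis using D unfolding opt_eq by simp
  next
    assume "(\<forall>k. wgain mu gv k > 0) \<and> (\<forall>k j. k \<noteq> j \<longrightarrow> hv $ k * wgain mu gv j \<noteq> hv $ j * wgain mu gv k)"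
    then have "wgain mu gv (\<pi> 0) > 0" by blast
    then have T: "tdma_power mu Pst hv gv (\<pi> 0) = (\<lambda>k. if k = \<pi> 0 then min (Pst (\<pi> 0)) (max 0 (1 / wgain mu gv (\<pi> 0) - 1 / hv $ (\<pi> 0))) else 0)"
      using tdma_eq hp by blast
    show ?thesis using D unfolding opt_eq T by simp
  qed
qed

theorem theorem3p3:
  fixes M :: "'a measure"
    and h :: "'a \<Rightarrow> real^'k::finite"
    and g :: "'a \<Rightarrow> real^('k \<times> 'm::finite)"
    and mu :: "'m \<Rightarrow> real"
    and Pst :: "'k \<Rightarrow> real"
  assumes K2: "CARD('k) \<ge> 2"
    and mu_nonneg: "\<forall>m. mu m \<ge> 0"
    and Pst_pos: "\<forall>k. Pst k > 0"
    and prob: "prob_space M"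
    and indep: "prob_space.indep_vars M (\<lambda>_. borel) (gains h g) UNIV"
    and nonneg: "\<forall>\<omega>\<in>space M. (\<forall>k. h \<omega> $ k \<ge> 0) \<and> (\<forall>i. g \<omega> $ i \<ge> 0)"
    and cdf_cont: "continuous_on UNIV (joint_cdf M h g)"
    and cdf_diff: "\<forall>z. joint_cdf M h g differentiable (at z)"
  shows "AE \<omega> in M. \<forall>\<pi>. sorted_perm mu (h \<omega>) (g \<omega>) \<pi> \<longrightarrow>
           (((\<forall>p. optimal_power mu Pst (h \<omega>) (g \<omega>) p \<longrightarrow> card {k. p k > 0} \<le> 1)
              \<longleftrightarrow> ereal (1 + h \<omega> $ \<pi> 0 * Pst (\<pi> 0))
                    \<ge> eratio (h \<omega> $ \<pi> 1) (wgain mu (g \<omega>) (\<pi> 1)))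
            \<and> (ereal (1 + h \<omega> $ \<pi> 0 * Pst (\<pi> 0))
                    \<ge> eratio (h \<omega> $ \<pi> 1) (wgain mu (g \<omega>) (\<pi> 1))
               \<longrightarrow> (\<forall>p. optimal_power mu Pst (h \<omega>) (g \<omega>) p
                        \<longleftrightarrow> p = tdma_power mu Pst (h \<omega>) (g \<omega>) (\<pi> 0))))"
proof -
  interpret prob_space M by (rule prob)
  have rv[measurable]: "\<And>i. gains h g i \<in> borel_measurable M"
    using indep unfolding indep_vars_def by auto
  have rvh[measurable]: "(\<lambda>\<omega>. h \<omega> $ k) \<in> borel_measurable M" for k
    using rv[of "Inl k"] by simp
  have rvg[measurable]: "(\<lambda>\<omega>. g \<omega> $ km) \<in> borel_measurable M" for km
    using rv[of "Inr km"] by simp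
  have atom: "\<And>i a. measure M {\<omega>\<in>space M. gains h g i \<omega> = a} = 0"
    by (rule gains_atomless[OF rv cdf_cont])
  have ae0: "AE \<omega> in M. \<forall>i. gains h g i \<omega> \<noteq> 0"
  proof (subst AE_all_countable, intro allI)
    fix i
    have "{\<omega>\<in>space M. gains h g i \<omega> = 0} \<in> sets M" by measurable
    then show "AE \<omega> in M. gains h g i \<omega> \<noteq> 0"
      using prob_Collect_eq_0[of "\<lambda>\<omega>. gains h g i \<omega> = 0"] atom[of i 0] by simp
  qed
  have pos: "AE \<omega> in M. (\<forall>k. h \<omega> $ k > 0) \<and> (\<forall>km. g \<omega> $ km > 0)"
    using ae0 AE_space
  proof eventually_elim
    case (elim \<omega>)
    then show ?case using nonneg
      by (metis (no_types, lifting) gains_Inl gains_Inr less_eq_real_def)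
  qed
  show ?thesis
  proof (cases "\<exists>m0. mu m0 > 0")
    case False
    have mu0: "\<forall>m. mu m = 0"
    proof
      fix m
      have "\<not> mu m > 0" using False by blast
      then show "mu m = 0" using mu_nonneg[rule_format, of m] by simp
    qed
    have c0: "\<And>gv k. wgain mu gv k = 0" unfolding wgain_def using mu0 by simp
    show ?thesis using pos
    proof eventually_elim
      case (elim \<omega>)
      show ?case by (rule final_det[OF K2 Pst_pos]) (use elim c0 in auto)
    qed
  next
    case True
    then obtain m0 where m0: "mu m0 > 0" by blast
    have cpos: "wgain mu gv k > 0" if "\<forall>km. gv $ km > 0" for gv k
      unfolding wgain_def
    proof (rule sum_pos2[of UNIV m0])
      show "0 < mu m0 * gv $ (k, m0)" using m0 that by simp
      show "\<And>i. i \<in> UNIV \<Longrightarrow> 0 \<le> mu i * gv $ (k, i)" using mu_nonneg that by (simp add: less_imp_le)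
    qed auto
    have tie: "AE \<omega> in M. h \<omega> $ j * wgain mu (g \<omega>) k / wgain mu (g \<omega>) j \<noteq> h \<omega> $ k" if kj: "k \<noteq> j" for k j
    proof -
      define B where "B = UNIV - {Inl k :: 'k + ('k \<times> 'm)}"
      define \<phi> where "\<phi> x = x (Inl j) * (\<Sum>m\<in>UNIV. mu m * x (Inr (k, m))) / (\<Sum>m\<in>UNIV. mu m * x (Inr (j, m)))"
        for x :: "'k + ('k \<times> 'm) \<Rightarrow> real"
      have iv: "indep_var (PiM B (\<lambda>_. borel)) (\<lambda>\<omega>. restrict (\<lambda>i. gains h g i \<omega>) B)
                  (PiM {Inl k} (\<lambda>_. borel)) (\<lambda>\<omega>. restrict (\<lambda>i. gains h g i \<omega>) {Inl k})"
        by (rule indep_var_restrict[OF indep]) (auto simp: B_def)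
      have cB: "\<And>i. i \<in> B \<Longrightarrow> (\<lambda>x. x i) \<in> borel_measurable (PiM B (\<lambda>_. borel))"
        by (rule measurable_component_singleton)
      have [measurable]: "(\<lambda>x. x (Inl j)) \<in> borel_measurable (PiM B (\<lambda>_. borel))"
        using kj by (intro cB) (simp add: B_def)
      have [measurable]: "(\<lambda>x. x (Inr km)) \<in> borel_measurable (PiM B (\<lambda>_. borel))" for km
        by (intro cB) (simp add: B_def)
      have \<phi>m: "\<phi> \<in> borel_measurable (PiM B (\<lambda>_. borel))" unfolding \<phi>_def by measurable
      have \<psi>m: "(\<lambda>x. x (Inl k)) \<in> borel_measurable (PiM {Inl k} (\<lambda>_. borel))"
        by (rule measurable_component_singleton) simp
      note iv2 = indep_var_compose[OF iv \<phi>m \<psi>m]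
      have e1: "\<phi> \<circ> (\<lambda>\<omega>. restrict (\<lambda>i. gains h g i \<omega>) B) = (\<lambda>\<omega>. h \<omega> $ j * wgain mu (g \<omega>) k / wgain mu (g \<omega>) j)"
        using kj by (simp add: fun_eq_iff \<phi>_def B_def wgain_def)
      have e2: "(\<lambda>x. x (Inl k)) \<circ> (\<lambda>\<omega>. restrict (\<lambda>i. gains h g i \<omega>) {Inl k}) = (\<lambda>\<omega>. h \<omega> $ k)"
        by (simp add: fun_eq_iff)
      have iv3: "indep_var borel (\<lambda>\<omega>. h \<omega> $ j * wgain mu (g \<omega>) k / wgain mu (g \<omega>) j) borel (\<lambda>\<omega>. h \<omega> $ k)"
        using iv2 unfolding e1 e2 .
      show ?thesis
        by (rule indep_neq[OF iv3]) (use atom[of "Inl k"] in simp)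
    qed
    have ties: "AE \<omega> in M. \<forall>k j. k \<noteq> j \<longrightarrow> h \<omega> $ k * wgain mu (g \<omega>) j \<noteq> h \<omega> $ j * wgain mu (g \<omega>) k"
    proof (subst AE_all_countable, intro allI, subst AE_all_countable, intro allI)
      fix k j
      show "AE \<omega> in M. k \<noteq> j \<longrightarrow> h \<omega> $ k * wgain mu (g \<omega>) j \<noteq> h \<omega> $ j * wgain mu (g \<omega>) k"
      proof (cases "k = j")
        case False
        show ?thesis using tie[OF False] pos
        proof eventually_elim
          case (elim \<omega>)
          then have cj: "wgain mu (g \<omega>) j > 0" using cpos by blast
          show ?case
          proof (intro impI notI)
            assume "h \<omega> $ k * wgain mu (g \<omega>) j = h \<omega> $ j * wgain mu (g \<omega>) k"
            then have "h \<omega> $ j * wgain mu (g \<omega>) k / wgain mu (g \<omega>) j = h \<omega> $ k"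
              using cj by (simp add: field_simps)
            then show False using elim by simp
          qed
        qed
      qed simp
    qed
    show ?thesis using pos ties
    proof eventually_elim
      case (elim \<omega>)
      show ?case by (rule final_det[OF K2 Pst_pos]) (use elim cpos in auto)
    qed
  qed
qed

end
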